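(* Let $g\colon\mathbb R^d\to[0,+\infty)$ be a proper log-concave function whose support contains the origin in its interior. Then a set $U\subset\mathbb R^d$ is star-like with respect to $g$ if and only if $\langle p,u\rangle>-1$ for all $u\in U\cap\operatorname{supp}g$ and all $p\in\partial(-\ln g)(u)$.
   Context: $\operatorname{supp}g=\{x:g(x)>0\}$; proper: upper semi-continuous with finite positive integral. $\partial\psi(u)=\{p:\psi(y)\ge\psi(u)+\langle p,y-u\rangle\ \forall y\}$. Lifting $\mathrm{lift}(g)=\{(x,y)\in\mathbb R^d\times\mathbb R:x\in\overline{\operatorname{supp}g},|y|\le g(x)\}$. Fréchet normal cone $N_A(a_0)=\{v:\forall\varepsilon>0\,\exists\delta>0:\langle v,a-a_0\rangle\le\varepsilon|a-a_0|\ \forall a\in A,|a-a_0|\le\delta\}$. $U$ is star-like with respect to $g$ if for every $u\in U\cap\operatorname{supp}g$, $\langle(u,g(u)),\bar v\rangle>0$ for all nonzero $\bar v\in N_{\mathrm{lift}(g)}((u,g(u)))$. *)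

theory Defs
  imports "HOL-Analysis.Analysis"
begin

definition supp :: "('a::euclidean_space \<Rightarrow> real) \<Rightarrow> 'a set" where
  "supp g = {x. g x > 0}"

definition upper_semicont :: "('a::euclidean_space \<Rightarrow> real) \<Rightarrow> bool" where
  "upper_semicont g \<longleftrightarrow>
     (\<forall>x. \<forall>t. g x < t \<longrightarrow> (\<exists>\<delta>>0. \<forall>y. dist y x < \<delta> \<longrightarrow> g y < t))"

definition proper_fun :: "('a::euclidean_space \<Rightarrow> real) \<Rightarrow> bool" where
  "proper_fun g \<longleftrightarrow> upper_semicont g \<and>
     (\<integral>\<^sup>+ x. ennreal (g x) \<partial>lborel) < \<infinity> \<and>
     (\<integral>\<^sup>+ x. ennreal (g x) \<partial>lborel) > 0"

definition log_concave :: "('a::euclidean_space \<Rightarrow> real) \<Rightarrow> bool" where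
  "log_concave g \<longleftrightarrow> (\<forall>x y t. 0 < t \<and> t < 1 \<longrightarrow>
     g ((1 - t) *\<^sub>R x + t *\<^sub>R y) \<ge> g x powr (1 - t) * g y powr t)"

definition neg_ln :: "('a::euclidean_space \<Rightarrow> real) \<Rightarrow> 'a \<Rightarrow> ereal" where
  "neg_ln g x = (if g x > 0 then ereal (- ln (g x)) else \<infinity>)"

definition subdiff :: "('a::euclidean_space \<Rightarrow> ereal) \<Rightarrow> 'a \<Rightarrow> 'a set" where
  "subdiff \<psi> u = {p. \<forall>y. \<psi> y \<ge> \<psi> u + ereal (inner p (y - u))}"

definition lift :: "('a::euclidean_space \<Rightarrow> real) \<Rightarrow> ('a \<times> real) set" where
  "lift g = {(x, y). x \<in> closure (supp g) \<and> \<bar>y\<bar> \<le> g x}"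

definition frechet_normal_cone :: "('b::real_inner) set \<Rightarrow> 'b \<Rightarrow> 'b set" where
  "frechet_normal_cone A a0 = {v. \<forall>\<epsilon>>0. \<exists>\<delta>>0. \<forall>a\<in>A. norm (a - a0) \<le> \<delta> \<longrightarrow>
      inner v (a - a0) \<le> \<epsilon> * norm (a - a0)}"

definition star_like_wrt :: "'a::euclidean_space set \<Rightarrow> ('a \<Rightarrow> real) \<Rightarrow> bool" where
  "star_like_wrt U g \<longleftrightarrow> (\<forall>u \<in> U \<inter> supp g. \<forall>v \<in> frechet_normal_cone (lift g) (u, g u).
      v \<noteq> 0 \<longrightarrow> inner (u, g u) v > 0)"

end

theory Submission
  imports Defs
begin

lemma exp_lim: "((\<lambda>t. (exp (c*t) - 1) / t) \<longlongrightarrow> (c::real)) (at_right 0)"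
proof -
  have "((\<lambda>t. exp (c*t)) has_field_derivative exp (c*0) * c) (at 0 within {0<..})"
    by (auto intro!: derivative_eq_intros)
  then show ?thesis by (simp add: has_field_derivative_iff)
qed

lemma key:
  fixes g :: "'a::euclidean_space \<Rightarrow> real"
  assumes lc: "log_concave g" and gu: "g u > 0" and gx: "g x > 0"
    and v: "(w, s) \<in> frechet_normal_cone (lift g) (u, g u)"
  shows "inner w (x - u) + s * g u * (ln (g x) - ln (g u)) \<le> 0"
proof -
  define G where "G = g u"
  define a where "a = inner w (x - u)"
  define c where "c = ln (g x) - ln (g u)"
  define d where "d = x - u"
  have G0: "G > 0" using gu G_def by simp
  have main: "a + s*G*c \<le> e*(norm d + G*\<bar>c\<bar>)" if e: "e>0" for e
  proof -
    obtain \<delta> where \<delta>: "\<delta>>0" and H: "\<And>p. p\<in>lift g \<Longrightarrow> norm (p - (u,G)) \<le> \<delta> \<Longrightarrow>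
        inner (w,s) (p - (u,G)) \<le> e * norm (p - (u,G))"
      using v e unfolding frechet_normal_cone_def G_def by blast
    define q where "q t = (u + t *\<^sub>R d, G * exp (c*t))" for t
    have qd: "q t - (u,G) = (t *\<^sub>R d, G * (exp (c*t) - 1))" for t
      by (simp add: q_def algebra_simps)
    have "((\<lambda>t. (t *\<^sub>R d, G * (exp (c*t) - 1))) \<longlongrightarrow> (0 *\<^sub>R d, G * (exp (c*0) - 1))) (at_right 0)"
      by (intro tendsto_intros)
    then have "((\<lambda>t. q t - (u,G)) \<longlongrightarrow> 0) (at_right 0)"
      by (simp add: qd zero_prod_def)
    then have "((\<lambda>t. norm (q t - (u,G))) \<longlongrightarrow> 0) (at_right 0)"
      using tendsto_norm_zero by blast
    then have ev1: "eventually (\<lambda>t. norm (q t - (u,G)) < \<delta>) (at_right 0)"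
      using \<delta> order_tendstoD(2) by blast
    have ev2: "eventually (\<lambda>t. 0 < t \<and> t < (1::real)) (at_right 0)"
      unfolding eventually_at_right_field by (intro exI[of _ 1]) auto
    have ev: "eventually (\<lambda>t. a + s*G*((exp (c*t) - 1)/t) \<le> e*(norm d + G*\<bar>(exp (c*t) - 1)/t\<bar>)) (at_right 0)"
      using ev1 ev2
    proof eventually_elim
      case (elim t)
      then have t: "0 < t" "t < 1" and nq: "norm (q t - (u,G)) < \<delta>" by auto
      have "(1 - t) *\<^sub>R u + t *\<^sub>R x = u + t *\<^sub>R d" by (simp add: d_def algebra_simps)
      moreover have "g ((1 - t) *\<^sub>R u + t *\<^sub>R x) \<ge> g u powr (1 - t) * g x powr t"
        using lc t unfolding log_concave_def by blast
      moreover have "g u powr (1 - t) * g x powr t = G * exp (c*t)"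
        using gu gx by (simp add: powr_def G_def c_def exp_add[symmetric] algebra_simps exp_diff)
      ultimately have gq: "g (u + t *\<^sub>R d) \<ge> G * exp (c*t)" by simp
      have "0 < G * exp (c*t)" using G0 by simp
      then have "q t \<in> lift g"
        using gq unfolding q_def lift_def supp_def
        by (auto intro!: closure_subset[THEN subsetD])
      then have "inner (w,s) (q t - (u,G)) \<le> e * norm (q t - (u,G))" using H nq by simp
      also have "\<dots> \<le> e * (t * norm d + G * \<bar>exp (c*t) - 1\<bar>)"
        using norm_Pair_le[of "t *\<^sub>R d" "G * (exp (c*t) - 1)"] e t G0
        by (auto simp: qd abs_mult intro!: mult_left_mono)
      finally have "t * a + s * (G * (exp (c*t) - 1)) \<le> e * (t * norm d + G * \<bar>exp (c*t) - 1\<bar>)"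
        by (simp add: qd a_def d_def)
      then have "(t * a + s * (G * (exp (c*t) - 1))) / t \<le> e * (t * norm d + G * \<bar>exp (c*t) - 1\<bar>) / t"
        using t by (simp add: divide_right_mono)
      then show ?case using t by (simp add: field_simps abs_div)
    qed
    have l1: "((\<lambda>t. a + s*G*((exp (c*t) - 1)/t)) \<longlongrightarrow> a + s*G*c) (at_right 0)"
      by (intro tendsto_intros exp_lim)
    have l2: "((\<lambda>t. e*(norm d + G*\<bar>(exp (c*t) - 1)/t\<bar>)) \<longlongrightarrow> e*(norm d + G*\<bar>c\<bar>)) (at_right 0)"
      by (intro tendsto_intros exp_lim)
    show ?thesis by (rule tendsto_le[OF _ l2 l1 ev]) simp
  qed
  have "a + s*G*c \<le> 0"
  proof (rule field_le_epsilon)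
    fix e :: real assume e: "e > 0"
    define K where "K = norm d + G*\<bar>c\<bar> + 1"
    have "G*\<bar>c\<bar> \<ge> 0" using G0 by simp
    then have K: "K > 0" "K - 1 \<ge> 0" using norm_ge_zero[of d] unfolding K_def by linarith+
    have "a + s*G*c \<le> e/K * (K - 1)" using main[of "e/K"] e K by (simp add: K_def)
    also have "\<dots> \<le> e" using K e by (simp add: field_simps)
    finally show "a + s*G*c \<le> 0 + e" by simp
  qed
  then show ?thesis by (simp add: a_def G_def c_def)
qed

lemma aux: "(n::real) \<ge> 0 \<Longrightarrow> n * (1/(2*n+1)) \<le> 1/2" by (simp add: field_simps)

lemma exp_quad: fixes z :: real assumes "\<bar>z\<bar> \<le> 1/2"
  shows "z + exp (-z) - 1 \<le> 2 * z^2"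
proof -
  have z1: "1 + z > 0" "1 + z \<ge> 1/2" using assms by auto
  have "exp z \<ge> 1 + z" by (rule exp_ge_add_one_self)
  then have "exp (-z) \<le> 1/(1+z)" using z1 by (simp add: exp_minus field_simps)
  moreover have "1/(1+z) - 1 + z = z^2/(1+z)" using z1 by (simp add: field_simps power2_eq_square)
  moreover have "z^2 * 1 \<le> z^2 * (2*(1+z))" using z1 by (intro mult_left_mono) auto
  then have "z^2/(1+z) \<le> 2 * z^2" using z1 by (simp add: pos_divide_le_eq algebra_simps)
  ultimately show ?thesis by linarith
qed

theorem mainTheorem9:
  fixes g :: "'a::euclidean_space \<Rightarrow> real" and U :: "'a set"
  assumes "\<And>x. g x \<ge> 0"
    and "proper_fun g"
    and "log_concave g"
    and "0 \<in> interior (supp g)"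
  shows "star_like_wrt U g \<longleftrightarrow>
    (\<forall>u \<in> U \<inter> supp g. \<forall>p \<in> subdiff (neg_ln g) u. inner p u > -1)"
proof
  assume SL: "star_like_wrt U g"
  show "\<forall>u \<in> U \<inter> supp g. \<forall>p \<in> subdiff (neg_ln g) u. inner p u > -1"
  proof (intro ballI)
    fix u p assume u: "u \<in> U \<inter> supp g" and p: "p \<in> subdiff (neg_ln g) u"
    define G where "G = g u"
    have G0: "G > 0" using u by (simp add: supp_def G_def)
    have sub: "g x \<le> G * exp (- inner p (x - u))" if gx: "g x > 0" for x
    proof -
      have "neg_ln g x \<ge> neg_ln g u + ereal (inner p (x - u))" using p by (simp add: subdiff_def)
      then have "- ln (g x) \<ge> - ln G + inner p (x - u)" using gx G0 by (simp add: neg_ln_def G_def)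
      then have "ln (g x) \<le> ln G - inner p (x - u)" by simp
      then have "exp (ln (g x)) \<le> exp (ln G - inner p (x - u))" by simp
      then show ?thesis using gx G0 by (simp add: exp_diff exp_minus field_simps)
    qed
    have vN: "(G *\<^sub>R p, 1) \<in> frechet_normal_cone (lift g) (u, g u)"
      unfolding frechet_normal_cone_def
    proof (intro CollectI allI impI)
      fix e :: real assume e: "e > 0"
      define \<delta> where "\<delta> = min (1/(2*norm p + 1)) (e/(2*G*(norm p)^2 + 1))"
      have "0 \<le> 2*G*(norm p)^2" using G0 by simp
      then have GP: "2*G*(norm p)^2 + 1 > 0" by linarith
      have \<delta>0: "\<delta> > 0" proof -
        have "0 < 2 * norm p + 1" using norm_ge_zero[of p] by linarith
        then show ?thesis using e GP by (simp add: \<delta>_def)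
      qed
      show "\<exists>\<delta>>0. \<forall>a\<in>lift g. norm (a - (u, g u)) \<le> \<delta> \<longrightarrow>
          inner (G *\<^sub>R p, 1) (a - (u, g u)) \<le> e * norm (a - (u, g u))"
      proof (intro exI[of _ \<delta>] conjI ballI impI \<delta>0)
        fix a assume a: "a \<in> lift g" and na: "norm (a - (u, g u)) \<le> \<delta>"
        obtain x y where axy: "a = (x, y)" by (cases a)
        have ay: "\<bar>y\<bar> \<le> g x" using a axy by (simp add: lift_def)
        have nd: "norm (x - u) \<le> \<delta>" using na axy norm_fst_le[of "x - u" "y - g u"] by simp
        define z where "z = inner p (x - u)"
        have zb: "\<bar>z\<bar> \<le> norm p * norm (x - u)" unfolding z_def by (rule Cauchy_Schwarz_ineq2)
        have "norm p * norm (x - u) \<le> norm p * (1/(2*norm p + 1))"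
          using nd by (intro mult_left_mono) (auto simp: \<delta>_def)
        also have "\<dots> \<le> 1/2" by (rule aux) simp
        finally have z2: "\<bar>z\<bar> \<le> 1/2" using zb by linarith
        have rhs: "e * norm (x - u) \<le> e * norm (a - (u, g u))"
          using e axy norm_fst_le[of "x - u" "y - g u"] by simp
        have lhs: "inner (G *\<^sub>R p, 1) (a - (u, g u)) = G * z + (y - G)"
          by (simp add: axy z_def G_def)
        show "inner (G *\<^sub>R p, 1) (a - (u, g u)) \<le> e * norm (a - (u, g u))"
        proof (cases "g x > 0")
          case False
          then have "y = 0" using ay assms(1)[of x] by simp
          moreover have "G * z \<le> G * 1" using z2 G0 by (intro mult_left_mono) auto
          ultimately have "G * z + (y - G) \<le> 0" by simp
          moreover have "0 \<le> e * norm (a - (u, g u))" using e by simp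
          ultimately show ?thesis using lhs by linarith
        next
          case True
          have "G * z + (y - G) \<le> G * (z + exp (-z) - 1)"
            using sub[OF True] ay by (simp add: z_def algebra_simps)
          also have "\<dots> \<le> G * (2 * z^2)" using exp_quad[OF z2] G0 by simp
          also have "\<dots> \<le> G * (2 * (norm p * norm (x - u))^2)"
          proof -
            have "z^2 \<le> (norm p * norm (x - u))^2"
              using zb abs_le_square_iff[of z "norm p * norm (x - u)"] by simp
            then show ?thesis using G0 by simp
          qed
          also have "\<dots> = (2*G*(norm p)^2) * norm (x - u) * norm (x - u)"
            by (simp add: power2_eq_square)
          also have "\<dots> \<le> (2*G*(norm p)^2 + 1) * norm (x - u) * norm (x - u)"
            by (intro mult_right_mono) auto
          also have "\<dots> \<le> (2*G*(norm p)^2 + 1) * (e/(2*G*(norm p)^2 + 1)) * norm (x - u)"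
            using nd GP by (intro mult_right_mono mult_left_mono) (auto simp: \<delta>_def)
          also have "\<dots> = e * norm (x - u)" using GP by simp
          finally show ?thesis using lhs rhs by linarith
        qed
      qed
    qed
    have "(G *\<^sub>R p, (1::real)) \<noteq> 0" by (simp add: zero_prod_def)
    then have "inner (u, g u) (G *\<^sub>R p, 1) > 0"
      using SL u vN unfolding star_like_wrt_def by blast
    then have "G * (inner p u + 1) > 0" by (simp add: G_def algebra_simps inner_commute)
    then show "inner p u > -1" using G0 by (simp add: zero_less_mult_iff)
  qed
next
  assume C: "\<forall>u \<in> U \<inter> supp g. \<forall>p \<in> subdiff (neg_ln g) u. inner p u > -1"
  show "star_like_wrt U g"
    unfolding star_like_wrt_def
  proof (intro ballI impI)
    fix u v assume u: "u \<in> U \<inter> supp g" and vN: "v \<in> frechet_normal_cone (lift g) (u, g u)"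
      and v0: "v \<noteq> 0"
    obtain w s where vws: "v = (w, s)" by (cases v)
    define G where "G = g u"
    have G0: "G > 0" using u by (simp add: supp_def G_def)
    have wsN: "(w, s) \<in> frechet_normal_cone (lift g) (u, g u)" using vN vws by simp
    have s0: "s \<ge> 0"
    proof -
      have "- s \<le> 0 + e" if e: "e > 0" for e
      proof -
        obtain \<delta> where \<delta>: "\<delta>>0" and H: "\<And>a. a\<in>lift g \<Longrightarrow> norm (a - (u,g u)) \<le> \<delta> \<Longrightarrow>
            inner (w,s) (a - (u,g u)) \<le> e * norm (a - (u,g u))"
          using wsN e unfolding frechet_normal_cone_def by blast
        define h where "h = min \<delta> (G/2)"
        have h: "h > 0" "h \<le> \<delta>" "h \<le> G/2" using \<delta> G0 by (auto simp: h_def)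
        have "u \<in> closure (supp g)" using u closure_subset by blast
        then have "(u, G - h) \<in> lift g" using h G0 by (auto simp: lift_def G_def)
        moreover have "(u, G - h) - (u, g u) = (0, -h)" by (simp add: G_def)
        ultimately have "inner (w,s) (0, -h) \<le> e * norm ((0::'a), -h)"
          using H[of "(u, G - h)"] h by simp
        then have "(- s) * h \<le> e * h" using h by simp
        then have "- s \<le> e" by (rule mult_right_le_imp_le) (use h in simp)
        then show ?thesis by simp
      qed
      then show ?thesis using field_le_epsilon[of "-s" 0] by simp
    qed
    show "inner (u, g u) v > 0"
    proof (cases "s > 0")
      case True
      define p where "p = (1/(s*G)) *\<^sub>R w"
      have sG: "s * G > 0" using True G0 by simp
      have "p \<in> subdiff (neg_ln g) u"
        unfolding subdiff_def
      proof (intro CollectI allI)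
        fix y
        show "neg_ln g y \<ge> neg_ln g u + ereal (inner p (y - u))"
        proof (cases "g y > 0")
          case False then show ?thesis by (simp add: neg_ln_def)
        next
          case gy: True
          have "inner w (y - u) + s * G * (ln (g y) - ln G) \<le> 0"
            using key[OF assms(3) _ gy wsN] G0 by (simp add: G_def)
          then have "(inner w (y - u) + s * G * (ln (g y) - ln G)) / (s*G) \<le> 0"
            using sG by (intro divide_nonpos_pos) auto
          moreover have "(inner w (y - u) + s * G * (ln (g y) - ln G)) / (s*G)
              = inner w (y - u) / (s*G) + (ln (g y) - ln G)"
          proof -
            have "s * G \<noteq> 0" using sG by linarith
            then show ?thesis by (simp add: add_divide_distrib)
          qed
          ultimately have "inner w (y - u) / (s*G) + (ln (g y) - ln G) \<le> 0" by simp
          then have "- ln (g y) \<ge> - ln G + inner p (y - u)"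
            by (simp add: p_def)
          then show ?thesis using gy G0 by (simp add: neg_ln_def G_def)
        qed
      qed
      then have "inner p u > -1" using C u by blast
      then have "inner w u / (s*G) > -1" by (simp add: p_def)
      then have "inner w u > - (s*G)" using sG by (simp add: field_simps)
      then show ?thesis by (simp add: vws G_def inner_commute algebra_simps)
    next
      case False
      then have s: "s = 0" using s0 by simp
      then have w0: "w \<noteq> 0" using v0 vws by (simp add: zero_prod_def)
      obtain r where r: "r > 0" "ball 0 r \<subseteq> supp g"
        using assms(4) by (meson mem_interior)
      define z where "z = (r/2/norm w) *\<^sub>R w"
      have "norm z = r/2" using w0 r by (simp add: z_def)
      then have "z \<in> supp g" using r by auto
      then have gz: "g z > 0" by (simp add: supp_def)
      have "inner w (z - u) \<le> 0"
        using key[OF assms(3) _ gz wsN] G0 s by (simp add: G_def)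
      moreover have "inner w z = r/2 * norm w" using w0
        by (simp add: z_def power2_norm_eq_inner[symmetric] power2_eq_square)
      moreover have "r/2 * norm w > 0" using r w0 by simp
      ultimately have "inner w u > 0" by (simp add: inner_diff_right)
      then show ?thesis by (simp add: vws s inner_commute)
    qed
  qed
qed

end
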